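(* Let $d\ge 2$, $k\ge 2$ and $n>d$ be integers. Then $$m^*(n,d,k)\le \min_{\substack{2\le i\le\lceil n/2\rceil\\ k_1,k_2\ge 1,\ k_1+k_2=k}}\Big\{m^*\big(\lceil n/i\rceil,d,k_2\big)+i\cdot m^*\big(\lceil n/i\rceil,\lfloor d/2\rfloor,k_1\big)\Big\}.$$
   Context: For a binary matrix $M$ and a nonempty set $S$ of its columns, $S$ is a stopping set if the submatrix formed by $S$ has no row with exactly one $1$; the stopping distance $s(M)$ is the minimum size of a stopping set ($+\infty$ if none). For positive integers $d,k$, $M$ is $(d,k)$-decodable if $s(M)\ge d+1$ and every column of $M$ has exactly $k$ ones. For positive integers $n,d,k$ (with $d$ possibly exceeding $n$), $m^*(n,d,k)$ is the minimum $m$ such that an $m\times n$ $(d,k)$-decodable binary matrix exists. *)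

theory Defs
  imports Complex_Main "HOL-Library.Extended_Nat"
begin

text \<open>A binary m x n matrix is represented by M :: nat => nat => bool,
  where M r c (for r < m, c < n) is the entry in row r, column c;
  entries outside the range are irrelevant.\<close>

definition stopping_set :: "nat \<Rightarrow> nat \<Rightarrow> (nat \<Rightarrow> nat \<Rightarrow> bool) \<Rightarrow> nat set \<Rightarrow> bool" where
  "stopping_set m n M S \<longleftrightarrow>
     S \<noteq> {} \<and> S \<subseteq> {..<n} \<and> (\<forall>r<m. card {c \<in> S. M r c} \<noteq> 1)"

text \<open>Stopping distance; Inf of the empty set in enat is infinity.\<close>
definition stopping_distance :: "nat \<Rightarrow> nat \<Rightarrow> (nat \<Rightarrow> nat \<Rightarrow> bool) \<Rightarrow> enat" where
  "stopping_distance m n M = (INF S \<in> {S. stopping_set m n M S}. enat (card S))"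

definition decodable :: "nat \<Rightarrow> nat \<Rightarrow> nat \<Rightarrow> nat \<Rightarrow> (nat \<Rightarrow> nat \<Rightarrow> bool) \<Rightarrow> bool" where
  "decodable m n d k M \<longleftrightarrow>
     stopping_distance m n M \<ge> enat (d + 1) \<and> (\<forall>c<n. card {r. r < m \<and> M r c} = k)"

definition m_star :: "nat \<Rightarrow> nat \<Rightarrow> nat \<Rightarrow> nat" where
  "m_star n d k = (LEAST m. \<exists>M. decodable m n d k M)"

end

theory Submission imports Defs begin

lemma dec_iff: "decodable m n d k M \<longleftrightarrow>
   (\<forall>S. stopping_set m n M S \<longrightarrow> d+1 \<le> card S) \<and> (\<forall>c<n. card {r. r<m \<and> M r c} = k)"
  unfolding decodable_def stopping_distance_def by (simp add: le_INF_iff)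

lemma div_range: "(0::nat) < k \<Longrightarrow> (r div k = c) \<longleftrightarrow> (c*k \<le> r \<and> r < c*k+k)"
  by (metis add_diff_inverse_nat diff_add_inverse2
    div_times_less_eq_dividend dividend_less_div_times le_less_Suc_eq
    less_eq_div_iff_mult_less_eq less_mult_imp_div_less mult_Suc
    not_add_less2)

lemma stopD:
  assumes "stopping_set m n M S"
  shows "S \<noteq> {}" "S \<subseteq> {..<n}" "\<And>r. r < m \<Longrightarrow> card {c \<in> S. M r c} \<noteq> 1"
  using assms unfolding stopping_set_def by blast+

lemma exists_dec:
  assumes "k \<ge> 1"
  shows "decodable (n*k) n d k (\<lambda>r c. r div k = c)"
  unfolding dec_iff
proof (intro conjI allI impI)
  fix S assume S: "stopping_set (n*k) n (\<lambda>r c. r div k = c) S"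
  obtain c where c: "c \<in> S" using stopD(1)[OF S] by blast
  have cn: "c < n" using stopD(2)[OF S] c by blast
  have kp: "0 < k" using assms by simp
  have "c*k < n*k" using cn kp by simp
  then have ne: "card {c' \<in> S. c*k div k = c'} \<noteq> 1" by (rule stopD(3)[OF S])
  have "c*k div k = c" using kp by simp
  then have "{c' \<in> S. c*k div k = c'} = {c}" using c by blast
  then have False using ne by simp
  then show "d+1 \<le> card S" by (rule FalseE)
next
  fix c assume cn: "c < n"
  have kp: "0 < k" using assms by simp
  have "{r. r < n*k \<and> r div k = c} = {c*k..<c*k+k}"
  proof (intro set_eqI iffI)
    fix r assume "r \<in> {r. r < n*k \<and> r div k = c}"
    then have "r div k = c" by blast
    then show "r \<in> {c*k..<c*k+k}" using div_range[OF kp, of r c] by simp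
  next
    fix r assume r: "r \<in> {c*k..<c*k+k}"
    have "r div k = c" using r div_range[OF kp, of r c] by simp
    moreover have "r < n*k"
    proof -
      have "Suc c \<le> n" using cn by simp
      then have "Suc c * k \<le> n * k" by (rule mult_le_mono1)
      then have "c*k+k \<le> n*k" by simp
      then show ?thesis using r by simp
    qed
    ultimately show "r \<in> {r. r < n*k \<and> r div k = c}" by blast
  qed
  then show "card {r. r < n*k \<and> r div k = c} = k" by simp
qed

lemma m_star_dec:
  assumes "k \<ge> 1"
  shows "\<exists>M. decodable (m_star n d k) n d k M"
  unfolding m_star_def by (rule LeastI_ex) (use exists_dec[OF assms] in blast)

lemma m_star_le: "decodable m n d k M \<Longrightarrow> m_star n d k \<le> m"
  unfolding m_star_def by (rule Least_le) blast

lemma grp: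
  assumes "(N::nat) > 0"
  shows "{c\<in>S. c div N = g \<and> P (c mod N)} = (\<lambda>p. g*N+p) ` {p. p<N \<and> g*N+p \<in> S \<and> P p}"
proof (intro set_eqI iffI)
  fix c assume "c \<in> {c\<in>S. c div N = g \<and> P (c mod N)}"
  then have c: "c\<in>S" "c div N = g" "P (c mod N)" by auto
  have e: "c = g*N + c mod N" using c(2) div_mult_mod_eq[of c N] by simp
  show "c \<in> (\<lambda>p. g*N+p) ` {p. p<N \<and> g*N+p \<in> S \<and> P p}"
    using c assms e by (intro image_eqI[of _ _ "c mod N"]) auto
next
  fix c assume "c \<in> (\<lambda>p. g*N+p) ` {p. p<N \<and> g*N+p \<in> S \<and> P p}"
  then obtain p where p: "p<N" "g*N+p\<in>S" "P p" "c = g*N+p" by auto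
  then show "c \<in> {c\<in>S. c div N = g \<and> P (c mod N)}" by auto
qed

lemma grp_card:
  assumes "(N::nat) > 0"
  shows "card {c\<in>S. c div N = g \<and> P (c mod N)} = card {p. p<N \<and> g*N+p \<in> S \<and> P p}"
  unfolding grp[OF assms] by (rule card_image) (simp add: inj_on_def)

definition Mc :: "nat \<Rightarrow> nat \<Rightarrow> nat \<Rightarrow> (nat\<Rightarrow>nat\<Rightarrow>bool) \<Rightarrow> (nat\<Rightarrow>nat\<Rightarrow>bool) \<Rightarrow> nat \<Rightarrow> nat \<Rightarrow> bool" where
  "Mc ma mb N A B r c = (if r < ma then A r (c mod N)
      else ((r - ma) div mb = c div N \<and> B ((r - ma) mod mb) (c mod N)))"

lemma Mc_top: "r < ma \<Longrightarrow> Mc ma mb N A B r c = A r (c mod N)"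
  unfolding Mc_def by simp

lemma divmod_blk:
  assumes "s < (mb::nat)"
  shows "(g*mb+s) div mb = g" "(g*mb+s) mod mb = s"
proof -
  have "0 < mb" using assms by simp
  then show "(g*mb+s) div mb = g" using div_range[of mb "g*mb+s" g] assms by simp
  show "(g*mb+s) mod mb = s" using assms by simp
qed

lemma Mc_bot: "s < mb \<Longrightarrow> Mc ma mb N A B (ma+g*mb+s) c = (c div N = g \<and> B s (c mod N))"
  unfolding Mc_def using divmod_blk[of s mb g] by auto

lemma div_lt:
  assumes "c < (n::nat)" "n \<le> i*N"
  shows "c div N < i"
proof (rule ccontr)
  assume "\<not> c div N < i"
  then have "i \<le> c div N" by linarith
  then have "i*N \<le> c div N * N" by (rule mult_le_mono1)
  also have "\<dots> \<le> c" by (rule div_times_less_eq_dividend)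
  finally show False using assms by simp
qed

lemma blk_lt:
  assumes "s < mb" "g < (i::nat)"
  shows "ma + g*mb + s < ma + i*mb"
proof -
  have "Suc g \<le> i" using assms by simp
  then have "Suc g * mb \<le> i * mb" by (rule mult_le_mono1)
  then show ?thesis using assms by simp
qed

lemma Mc_weight:
  assumes N: "N > 0" and c: "c < n" and ni: "n \<le> i*N"
    and ka: "card {r. r<ma \<and> A r (c mod N)} = k2"
    and kb: "card {s. s<mb \<and> B s (c mod N)} = k1"
  shows "card {r. r < ma+i*mb \<and> Mc ma mb N A B r c} = k1+k2"
proof -
  define g where "g = c div N"
  define p where "p = c mod N"
  have gi: "g < i" unfolding g_def by (rule div_lt[OF c ni])
  have eq: "{r. r < ma+i*mb \<and> Mc ma mb N A B r c} =
     {r. r<ma \<and> A r p} \<union> (\<lambda>s. ma+g*mb+s) ` {s. s<mb \<and> B s p}"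
  proof (intro set_eqI iffI)
    fix r assume r: "r \<in> {r. r < ma+i*mb \<and> Mc ma mb N A B r c}"
    show "r \<in> {r. r<ma \<and> A r p} \<union> (\<lambda>s. ma+g*mb+s) ` {s. s<mb \<and> B s p}"
    proof (cases "r < ma")
      case True
      then show ?thesis using r Mc_top[OF True] unfolding p_def by simp
    next
      case False
      then have h: "(r - ma) div mb = g" "B ((r - ma) mod mb) p"
        using r unfolding Mc_def g_def p_def by auto
      have mbp: "0 < mb"
      proof (rule ccontr)
        assume "\<not> 0 < mb" then have "mb = 0" by simp
        then show False using r False by simp
      qed
      have "r = ma + g*mb + (r - ma) mod mb"
        using False h(1) div_mult_mod_eq[of "r - ma" mb] by simp
      moreover have "(r - ma) mod mb < mb" using mbp by simp
      ultimately show ?thesis using h(2) by blast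
    qed
  next
    fix r assume r: "r \<in> {r. r<ma \<and> A r p} \<union> (\<lambda>s. ma+g*mb+s) ` {s. s<mb \<and> B s p}"
    show "r \<in> {r. r < ma+i*mb \<and> Mc ma mb N A B r c}"
    proof (cases "r < ma")
      case True
      then show ?thesis using r Mc_top[OF True] unfolding p_def by auto
    next
      case False
      then obtain s where s: "s < mb" "B s p" "r = ma+g*mb+s" using r by auto
      have "r < ma + i*mb" using blk_lt[OF s(1) gi] s(3) by simp
      moreover have "Mc ma mb N A B r c" using Mc_bot[OF s(1)] s unfolding g_def p_def by simp
      ultimately show ?thesis by simp
    qed
  qed
  have disj: "{r. r<ma \<and> A r p} \<inter> (\<lambda>s. ma+g*mb+s) ` {s. s<mb \<and> B s p} = {}" by auto
  have "card {r. r < ma+i*mb \<and> Mc ma mb N A B r c}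
      = card {r. r<ma \<and> A r p} + card ((\<lambda>s. ma+g*mb+s) ` {s. s<mb \<and> B s p})"
    unfolding eq by (rule card_Un_disjoint) (auto simp: disj)
  also have "card ((\<lambda>s. ma+g*mb+s) ` {s. s<mb \<and> B s p}) = card {s. s<mb \<and> B s p}"
    by (rule card_image) (simp add: inj_on_def)
  finally show ?thesis using ka kb unfolding p_def by simp
qed


lemma Mc_stop:
  assumes N: "N > 0" and ni: "n \<le> i*N"
    and hA: "\<And>T. stopping_set ma N A T \<Longrightarrow> d+1 \<le> card T"
    and hB: "\<And>T. stopping_set mb N B T \<Longrightarrow> d div 2+1 \<le> card T"
    and S: "stopping_set (ma+i*mb) n (Mc ma mb N A B) S"
  shows "d+1 \<le> card S"
proof -
  define Sg where "Sg g = {p. p<N \<and> g*N+p \<in> S}" for g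
  have finS: "finite S" using stopD(2)[OF S] finite_subset by blast
  have memS: "c div N < i \<and> c mod N \<in> Sg (c div N)" if "c \<in> S" for c
  proof
    have "c < n" using stopD(2)[OF S] that by blast
    then show "c div N < i" by (rule div_lt[OF _ ni])
    have "c div N * N + c mod N = c" by (rule div_mult_mod_eq)
    then show "c mod N \<in> Sg (c div N)" unfolding Sg_def using that N by simp
  qed
  have emb: "(\<lambda>p. g*N+p) ` Sg g \<subseteq> S" for g unfolding Sg_def by blast
  have cemb: "card ((\<lambda>p. g*N+p) ` Sg g) = card (Sg g)" for g
    by (rule card_image) (simp add: inj_on_def)
  have blk: "d div 2 + 1 \<le> card (Sg g)" if g: "g < i" "Sg g \<noteq> {}" for g
  proof (rule hB)
    show "stopping_set mb N B (Sg g)"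
      unfolding stopping_set_def
    proof (intro conjI allI impI)
      show "Sg g \<noteq> {}" by (rule g(2))
      show "Sg g \<subseteq> {..<N}" unfolding Sg_def by blast
      fix s assume s: "s < mb"
      have r: "ma + g*mb + s < ma + i*mb" by (rule blk_lt[OF s g(1)])
      have "card {c\<in>S. Mc ma mb N A B (ma+g*mb+s) c} \<noteq> 1" by (rule stopD(3)[OF S r])
      moreover have "{c\<in>S. Mc ma mb N A B (ma+g*mb+s) c} = {c\<in>S. c div N = g \<and> B s (c mod N)}"
        using Mc_bot[OF s] by blast
      moreover have "card {c\<in>S. c div N = g \<and> B s (c mod N)} = card {p. p<N \<and> g*N+p \<in> S \<and> B s p}"
        by (rule grp_card[OF N])
      moreover have "{p. p<N \<and> g*N+p \<in> S \<and> B s p} = {p \<in> Sg g. B s p}"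
        unfolding Sg_def by blast
      ultimately show "card {p \<in> Sg g. B s p} \<noteq> 1" by simp
    qed
  qed
  show ?thesis
  proof (cases "\<exists>g1 g2. g1 \<noteq> g2 \<and> g1 < i \<and> g2 < i \<and> Sg g1 \<noteq> {} \<and> Sg g2 \<noteq> {}")
    case True
    then obtain g1 g2 where g: "g1 \<noteq> g2" "g1 < i" "g2 < i" "Sg g1 \<noteq> {}" "Sg g2 \<noteq> {}" by blast
    have disj: "(\<lambda>p. g1*N+p) ` Sg g1 \<inter> (\<lambda>p. g2*N+p) ` Sg g2 = {}"
    proof (rule ccontr)
      assume "\<not> ?thesis"
      then obtain p q where pq: "p \<in> Sg g1" "q \<in> Sg g2" "g1*N+p = g2*N+q" by blast
      have "p < N" "q < N" using pq unfolding Sg_def by auto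
      then have "(g1*N+p) div N = g1" "(g2*N+q) div N = g2"
        using divmod_blk by blast+
      then show False using pq(3) g(1) by simp
    qed
    have fin1: "finite ((\<lambda>p. g1*N+p) ` Sg g1)" using emb finS finite_subset by blast
    have fin2: "finite ((\<lambda>p. g2*N+p) ` Sg g2)" using emb finS finite_subset by blast
    have e1: "card ((\<lambda>p. g1*N+p) ` Sg g1 \<union> (\<lambda>p. g2*N+p) ` Sg g2)
        = card (Sg g1) + card (Sg g2)"
      using card_Un_disjoint[OF fin1 fin2 disj] cemb by simp
    have e2: "card ((\<lambda>p. g1*N+p) ` Sg g1 \<union> (\<lambda>p. g2*N+p) ` Sg g2) \<le> card S"
      by (rule card_mono[OF finS]) (use emb in blast)
    have "card (Sg g1) + card (Sg g2) \<le> card S" using e1 e2 by linarith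
    moreover have "d div 2 + 1 \<le> card (Sg g1)" by (rule blk[OF g(2) g(4)])
    moreover have "d div 2 + 1 \<le> card (Sg g2)" by (rule blk[OF g(3) g(5)])
    moreover have "d + 1 \<le> 2 * (d div 2 + 1)" by presburger
    ultimately show ?thesis by linarith
  next
    case False
    obtain c0 where c0: "c0 \<in> S" using stopD(1)[OF S] by blast
    define g0 where "g0 = c0 div N"
    have g0: "g0 < i" "c0 mod N \<in> Sg g0" using memS[OF c0] unfolding g0_def by auto
    have all: "c div N = g0" if "c \<in> S" for c
    proof (rule ccontr)
      assume ne: "c div N \<noteq> g0"
      have "c div N < i" "c mod N \<in> Sg (c div N)" using memS[OF that] by auto
      then show False using False ne g0 by blast
    qed
    have Seq: "{c\<in>S. c div N = g0 \<and> True} = S" using all by blast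
    have cS: "card S = card (Sg g0)"
      using grp_card[OF N, of S g0 "\<lambda>_. True"] unfolding Seq Sg_def by simp
    have "d + 1 \<le> card (Sg g0)"
    proof (rule hA)
      show "stopping_set ma N A (Sg g0)"
        unfolding stopping_set_def
      proof (intro conjI allI impI)
        show "Sg g0 \<noteq> {}" using g0 by blast
        show "Sg g0 \<subseteq> {..<N}" unfolding Sg_def by blast
        fix r assume r: "r < ma"
        have r': "r < ma + i*mb" using r by simp
        have "card {c\<in>S. Mc ma mb N A B r c} \<noteq> 1" by (rule stopD(3)[OF S r'])
        moreover have "{c\<in>S. Mc ma mb N A B r c} = {c\<in>S. c div N = g0 \<and> A r (c mod N)}"
          using Mc_top[OF r] all by blast
        moreover have "card {c\<in>S. c div N = g0 \<and> A r (c mod N)} = card {p. p<N \<and> g0*N+p \<in> S \<and> A r p}"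
          by (rule grp_card[OF N])
        moreover have "{p. p<N \<and> g0*N+p \<in> S \<and> A r p} = {p \<in> Sg g0. A r p}"
          unfolding Sg_def by blast
        ultimately show "card {p \<in> Sg g0. A r p} \<noteq> 1" by simp
      qed
    qed
    then show ?thesis using cS by simp
  qed
qed

lemma construction:
  assumes N: "N > 0" and ni: "n \<le> i*N"
    and dA: "decodable ma N d k2 A" and dB: "decodable mb N (d div 2) k1 B"
  shows "decodable (ma+i*mb) n d (k1+k2) (Mc ma mb N A B)"
  unfolding dec_iff
proof (intro conjI allI impI)
  fix S assume "stopping_set (ma + i * mb) n (Mc ma mb N A B) S"
  then show "d+1 \<le> card S"
    using Mc_stop[OF N ni] dA dB unfolding dec_iff by blast
next
  fix c assume c: "c < n"
  have cN: "c mod N < N" using N by simp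
  show "card {r. r < ma + i*mb \<and> Mc ma mb N A B r c} = k1 + k2"
    by (rule Mc_weight[OF N c ni])
       (use dA dB cN in \<open>simp add: dec_iff\<close>)+
qed

theorem theorem5p6:
  fixes n d k :: nat
  assumes "d \<ge> 2" and "k \<ge> 2" and "n > d"
  shows "m_star n d k \<le>
    Min {m_star (nat \<lceil>real n / real i\<rceil>) d k2
          + i * m_star (nat \<lceil>real n / real i\<rceil>) (d div 2) k1
         | i k1 k2. 2 \<le> i \<and> i \<le> nat \<lceil>real n / 2\<rceil> \<and> k1 \<ge> 1 \<and> k2 \<ge> 1 \<and> k1 + k2 = k}"
    (is "_ \<le> Min ?X")
proof -
  let ?f = "\<lambda>(i,k1,k2). m_star (nat \<lceil>real n / real i\<rceil>) d k2
          + i * m_star (nat \<lceil>real n / real i\<rceil>) (d div 2) k1"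
  let ?I = "{(i,k1,k2). 2 \<le> i \<and> i \<le> nat \<lceil>real n / 2\<rceil> \<and> k1 \<ge> 1 \<and> k2 \<ge> 1 \<and> k1 + k2 = k}"
  have Xsub: "?X \<subseteq> ?f ` ({..nat \<lceil>real n / 2\<rceil>} \<times> {..k} \<times> {..k})"
  proof
    fix x assume "x \<in> ?X"
    then obtain i k1 k2 where ik: "i \<le> nat \<lceil>real n / 2\<rceil>" "k1 + k2 = k"
      and x: "x = ?f (i,k1,k2)" by auto
    have "(i,k1,k2) \<in> {..nat \<lceil>real n / 2\<rceil>} \<times> {..k} \<times> {..k}" using ik by auto
    then show "x \<in> ?f ` ({..nat \<lceil>real n / 2\<rceil>} \<times> {..k} \<times> {..k})"
      using x by (rule rev_image_eqI)
  qed
  have finX: "finite ?X" by (rule finite_subset[OF Xsub]) simp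
  have two: "2 \<le> nat \<lceil>real n / 2\<rceil>"
  proof -
    have "real n \<ge> 3" using assms by simp
    then have "1 < real n / 2" by simp
    then have "1 < \<lceil>real n / 2\<rceil>" by (simp add: less_ceiling_iff)
    then show ?thesis by linarith
  qed
  have "?f (2, 1, k-1) \<in> ?X"
    by (simp only: mem_Collect_eq, intro exI[of _ 2] exI[of _ 1] exI[of _ "k-1"]) (use two assms in auto)
  then have neX: "?X \<noteq> {}" by blast
  have bound: "m_star n d k \<le> x" if xX: "x \<in> ?X" for x
  proof -
    obtain i k1 k2 where ik: "2 \<le> i" "k1 \<ge> 1" "k2 \<ge> 1" "k1 + k2 = k"
      and x: "x = m_star (nat \<lceil>real n / real i\<rceil>) d k2
          + i * m_star (nat \<lceil>real n / real i\<rceil>) (d div 2) k1"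
      using xX by blast
    define N where "N = nat \<lceil>real n / real i\<rceil>"
    have ip: "real i > 0" using ik by simp
    have "real n / real i \<le> real N" unfolding N_def by linarith
    then have "real n \<le> real i * real N" using ip by (simp add: divide_le_eq mult.commute)
    then have ni: "n \<le> i*N" by (simp add: of_nat_mult[symmetric] del: of_nat_mult)
    have Np: "N > 0"
    proof -
      have "real n / real i > 0" using ip assms by simp
      then show ?thesis unfolding N_def by linarith
    qed
    obtain A where A: "decodable (m_star N d k2) N d k2 A" using m_star_dec[OF ik(3)] by blast
    obtain B where B: "decodable (m_star N (d div 2) k1) N (d div 2) k1 B" using m_star_dec[OF ik(2)] by blast
    have "decodable (m_star N d k2 + i * m_star N (d div 2) k1) n d (k1+k2) (Mc (m_star N d k2) (m_star N (d div 2) k1) N A B)"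
      by (rule construction[OF Np ni A B])
    then have "m_star n d k \<le> m_star N d k2 + i * m_star N (d div 2) k1"
      using ik(4) by (metis m_star_le)
    then show ?thesis unfolding x N_def .
  qed
  show ?thesis by (rule Min.boundedI[OF finX neX]) (rule bound)
qed

end
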